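(* Fix any total budget $\mathrm{TB}\in\mathbb N_0$ and let $n\in\mathbb N$. Then the disjunctive sum $n+\bar n=0$, where $n$ denotes the integer game form.
   Context: Game forms are defined recursively: $G=\{G^{\mathcal L}\mid G^{\mathcal R}\}$ with finite sets of Left and Right options, and finite birthday. $0=\{\varnothing\mid\varnothing\}$; for $n\in\mathbb N$ the integer game form is $n=\{n-1\mid\varnothing\}$. The conjugate is $\bar G=\{\overline{G^{\mathcal R}}\mid\overline{G^{\mathcal L}}\}$. The budget set for total budget $\mathrm{TB}$ is $\mathcal B=\{0,\dots,\mathrm{TB},\hat 0,\dots,\widehat{\mathrm{TB}}\}$: state $p$ (resp. $\hat p$) means Left holds $p$ dollars and Right holds $\mathrm{TB}-p$, and Right (resp. Left) holds the tie-breaking marker. Play of $(G,\tilde p)$: at every position (terminal ones included) both players bid simultaneously, Left $\ell\in\{0,\dots,p\}$, Right $r\in\{0,\dots,\mathrm{TB}-p\}$. If Left holds the marker (state $\hat p$): if $\ell>r$ Left moves to $(G^L,\widehat{p-\ell})$, or, including the marker (allowed when $\ell\ge r$), to $(G^L,p-\ell)$; if $\ell=r$ Left wins, the marker passes to Right, play continues at $(G^L,p-\ell)$; if $\ell<r$ Right moves to $(G^R,\widehat{p+r})$. Symmetrically when Right holds the marker (state $p$): if $r>\ell$ Right moves to $(G^R,p+r)$ or, including the marker, to $(G^R,\widehat{p+r})$; if $r=\ell$ Right wins, the marker passes to Left, play continues at $(G^R,\widehat{p+r})$; if $r<\ell$ Left moves to $(G^L,p-\ell)$. A player who wins a bid but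 has no option loses. $o(G,\tilde p)\in\{\mathrm L,\mathrm R\}$ is the winner under optimal play; $\mathrm L>\mathrm R$. Disjunctive sum $G+H=\{G^{\mathcal L}+H,G+H^{\mathcal L}\mid G^{\mathcal R}+H,G+H^{\mathcal R}\}$. $G\ge H$ means $o(G+X,\tilde p)\ge o(H+X,\tilde p)$ for all game forms $X$ and all $\tilde p\in\mathcal B$; $G=H$ means $G\ge H$ and $H\ge G$. *)

theory Defs
  imports Main "HOL-Library.FSet"
begin

datatype game = Game (lopts: "game fset") (ropts: "game fset")

primrec gconj :: "game \<Rightarrow> game" where
  "gconj (Game L R) = Game (fimage gconj R) (fimage gconj L)"

primrec int_game :: "nat \<Rightarrow> game" where
  "int_game 0 = Game {||} {||}"
| "int_game (Suc k) = Game {|int_game k|} {||}"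

lemma game_opt_size[termination_simp]:
  "x |\<in>| L \<Longrightarrow> size x < size (Game L R)"
  "x |\<in>| R \<Longrightarrow> size x < size (Game L R)"
  by (induction L; auto simp: less_SucI) (induction R; auto simp: less_SucI)

function gsum :: "game \<Rightarrow> game \<Rightarrow> game" where
  "gsum (Game GL GR) (Game HL HR) =
     Game ((\<lambda>g. gsum g (Game HL HR)) |`| GL |\<union>| (\<lambda>h. gsum (Game GL GR) h) |`| HL)
          ((\<lambda>g. gsum g (Game HL HR)) |`| GR |\<union>| (\<lambda>h. gsum (Game GL GR) h) |`| HR)"
  by pat_completeness auto
termination
  by (relation "measure (\<lambda>(g,h). size g + size h)") (auto dest: game_opt_size)

text \<open>Bidding outcome. \<open>winL TB G p m\<close>: Left wins (has a winning strategy) in \<open>(G, p~)\<close>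
  with total budget TB, where Left holds \<open>p\<close> dollars, Right holds \<open>TB - p\<close>, and
  \<open>m = True\<close> iff Left holds the tie-breaking marker (state \<open>p^\<close>), \<open>m = False\<close> iff
  Right holds it (state \<open>p\<close>).  Left bids first in the quantifier order
  (exists a Left bid such that for every Right bid ...).\<close>
function winL :: "nat \<Rightarrow> game \<Rightarrow> nat \<Rightarrow> bool \<Rightarrow> bool" where
  "winL TB (Game GL GR) p m =
    (\<exists>l\<le>p. \<forall>r\<le>TB - p.
      (if m then
         (if r < l then (\<exists>g|\<in>|GL. winL TB g (p - l) True \<or> winL TB g (p - l) False)
          else if l = r then (\<exists>g|\<in>|GL. winL TB g (p - l) False)
          else (\<forall>g|\<in>|GR. winL TB g (p + r) True))
       else
         (if l < r then (\<forall>g|\<in>|GR. winL TB g (p + r) False \<and> winL TB g (p + r) True)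
          else if l = r then (\<forall>g|\<in>|GR. winL TB g (p + r) True)
          else (\<exists>g|\<in>|GL. winL TB g (p - l) False))))"
  by pat_completeness auto
termination
  by (relation "measure (\<lambda>(TB,g,p,m). size g)") (auto dest: game_opt_size)

datatype outcome = Lwin | Rwin

definition outcome :: "nat \<Rightarrow> game \<Rightarrow> nat \<Rightarrow> bool \<Rightarrow> outcome" where
  "outcome TB G p m = (if winL TB G p m then Lwin else Rwin)"

definition outcome_le :: "outcome \<Rightarrow> outcome \<Rightarrow> bool" where
  "outcome_le a b = (a = Rwin \<or> b = Lwin)"

definition game_ge :: "nat \<Rightarrow> game \<Rightarrow> game \<Rightarrow> bool" where
  "game_ge TB G H = (\<forall>X. \<forall>p\<le>TB. \<forall>m.
      outcome_le (outcome TB (gsum H X) p m) (outcome TB (gsum G X) p m))"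

definition game_eq :: "nat \<Rightarrow> game \<Rightarrow> game \<Rightarrow> bool" where
  "game_eq TB G H = (game_ge TB G H \<and> game_ge TB H G)"

end

theory Submission
  imports Defs
begin

lemma lopts_gsum: "lopts (gsum G H) = (\<lambda>g. gsum g H) |`| lopts G |\<union>| (\<lambda>h. gsum G h) |`| lopts H"
  by (cases G; cases H) simp

lemma ropts_gsum: "ropts (gsum G H) = (\<lambda>g. gsum g H) |`| ropts G |\<union>| (\<lambda>h. gsum G h) |`| ropts H"
  by (cases G; cases H) simp

definition T :: "nat \<Rightarrow> nat \<Rightarrow> game \<Rightarrow> game" where
  "T a b X = gsum (gsum (int_game a) (gconj (int_game b))) X"

lemma lopts_T: "lopts (T a b X) = (if 0 < a then {|T (a - 1) b X|} else {||}) |\<union>| T a b |`| lopts X"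
  unfolding T_def lopts_gsum
  by (cases a; cases b) auto

lemma ropts_T: "ropts (T a b X) = (if 0 < b then {|T a (b - 1) X|} else {||}) |\<union>| T a b |`| ropts X"
  unfolding T_def ropts_gsum
  by (cases a; cases b) auto

lemma size_lopts: "g |\<in>| lopts G \<Longrightarrow> size g < size G"
  by (cases G) (auto dest: game_opt_size)
lemma size_ropts: "g |\<in>| ropts G \<Longrightarrow> size g < size G"
  by (cases G) (auto dest: game_opt_size)

definition LM :: "nat \<Rightarrow> game \<Rightarrow> nat \<Rightarrow> bool \<Rightarrow> bool" where
  "LM TB G q u = (\<exists>g|\<in>|lopts G. winL TB g q u)"
definition RM :: "nat \<Rightarrow> game \<Rightarrow> nat \<Rightarrow> bool \<Rightarrow> bool" where
  "RM TB G q u = (\<forall>g|\<in>|ropts G. winL TB g q u)"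

lemma winL_unf: "winL TB G p m = (\<exists>l\<le>p. \<forall>r\<le>TB - p.
      (if m then
         (if r < l then LM TB G (p - l) True \<or> LM TB G (p - l) False
          else if l = r then LM TB G (p - l) False
          else RM TB G (p + r) True)
       else
         (if l < r then RM TB G (p + r) False \<and> RM TB G (p + r) True
          else if l = r then RM TB G (p + r) True
          else LM TB G (p - l) False)))"
  by (cases G) (simp only: winL.simps game.sel LM_def RM_def fBall_conj_distrib fBex_disj_distrib)

declare winL.simps[simp del]

definition bidok :: "nat \<Rightarrow> game \<Rightarrow> nat \<Rightarrow> bool \<Rightarrow> nat \<Rightarrow> nat \<Rightarrow> bool" where
  "bidok TB G p m l r = (if m then
         (if r < l then LM TB G (p - l) True \<or> LM TB G (p - l) False
          else if l = r then LM TB G (p - l) False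
          else RM TB G (p + r) True)
       else
         (if l < r then RM TB G (p + r) False \<and> RM TB G (p + r) True
          else if l = r then RM TB G (p + r) True
          else LM TB G (p - l) False))"

lemma winL_bid: "winL TB G p m = (\<exists>l\<le>p. \<forall>r\<le>TB - p. bidok TB G p m l r)"
  unfolding winL_unf bidok_def by (rule refl)

lemma winL_bidI: "l \<le> p \<Longrightarrow> (\<And>r. r \<le> TB - p \<Longrightarrow> bidok TB G p m l r) \<Longrightarrow> winL TB G p m"
  unfolding winL_bid by blast

lemma winL_bidE: "winL TB G p m \<Longrightarrow> (\<And>l. l \<le> p \<Longrightarrow> (\<And>r. r \<le> TB - p \<Longrightarrow> bidok TB G p m l r) \<Longrightarrow> Q) \<Longrightarrow> Q"
  unfolding winL_bid by blast

lemma bidok_T: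
  "r < l \<Longrightarrow> bidok TB G p True l r = (LM TB G (p - l) True \<or> LM TB G (p - l) False)"
  "bidok TB G p True l l = LM TB G (p - l) False"
  "l < r \<Longrightarrow> bidok TB G p True l r = RM TB G (p + r) True"
  by (auto simp: bidok_def)

lemma bidok_F:
  "r < l \<Longrightarrow> bidok TB G p False l r = LM TB G (p - l) False"
  "bidok TB G p False l l = RM TB G (p + l) True"
  "l < r \<Longrightarrow> bidok TB G p False l r = (RM TB G (p + r) False \<and> RM TB G (p + r) True)"
  by (auto simp: bidok_def)

lemma dom2:
  assumes LD: "\<And>q u. q \<le> TB \<Longrightarrow> LM TB G q u \<Longrightarrow> LM TB H q u"
    and RD: "\<And>q u. q \<le> TB \<Longrightarrow> RM TB G q u \<Longrightarrow> RM TB H q u"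
    and p: "p \<le> TB" and w: "winL TB G p m"
  shows "winL TB H p m"
proof -
  obtain l where l: "l \<le> p" and H: "\<And>r. r \<le> TB - p \<Longrightarrow> bidok TB G p m l r"
    using winL_bidE[OF w] by blast
  show ?thesis
  proof (rule winL_bidI[OF l])
    fix r assume r: "r \<le> TB - p"
    have q1: "p - l \<le> TB" "p + r \<le> TB" using p r by auto
    show "bidok TB H p m l r"
      using H[OF r] LD[OF q1(1)] RD[OF q1(2)] unfolding bidok_def by auto
  qed
qed

definition sle :: "nat \<Rightarrow> bool \<Rightarrow> nat \<Rightarrow> bool \<Rightarrow> bool" where
  "sle p m q n = (p \<le> q \<and> m = n \<or> p < q \<and> m \<and> \<not> n)"

lemma mon_step:
  assumes LMm: "\<And>q u q' u'. sle q u q' u' \<Longrightarrow> q' \<le> TB \<Longrightarrow> LM TB G q u \<Longrightarrow> LM TB G q' u'"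
    and RMm: "\<And>q u q' u'. sle q u q' u' \<Longrightarrow> q' \<le> TB \<Longrightarrow> RM TB G q u \<Longrightarrow> RM TB G q' u'"
    and s: "sle p m q n" and q: "q \<le> TB" and w: "winL TB G p m"
  shows "winL TB G q n"
proof -
  obtain l where l: "l \<le> p" and H: "\<And>r. r \<le> TB - p \<Longrightarrow> bidok TB G p m l r"
    using winL_bidE[OF w] by blast
  consider (FF) "m = False" "n = False" "p \<le> q" | (TT) "m" "n" "p \<le> q" | (TF) "m" "\<not> n" "p < q"
    using s unfolding sle_def by auto
  then show ?thesis
  proof cases
    case FF
    show ?thesis
    proof (rule winL_bidI[of l])
      show "l \<le> q" using l FF by simp
      fix r assume r: "r \<le> TB - q"
      then have r': "r \<le> TB - p" using FF by simp
      have A: "\<And>u. LM TB G (p - l) u \<Longrightarrow> LM TB G (q - l) u"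
        by (rule LMm) (use FF q in \<open>auto simp: sle_def\<close>)
      have B: "\<And>u. RM TB G (p + r) u \<Longrightarrow> RM TB G (q + r) u"
        by (rule RMm) (use FF q r in \<open>auto simp: sle_def\<close>)
      show "bidok TB G q n l r"
        using H[OF r'] A B FF unfolding bidok_def by auto
    qed
  next
    case TT
    show ?thesis
    proof (rule winL_bidI[of l])
      show "l \<le> q" using l TT by simp
      fix r assume r: "r \<le> TB - q"
      then have r': "r \<le> TB - p" using TT by simp
      have A: "\<And>u. LM TB G (p - l) u \<Longrightarrow> LM TB G (q - l) u"
        by (rule LMm) (use TT q in \<open>auto simp: sle_def\<close>)
      have B: "\<And>u. RM TB G (p + r) u \<Longrightarrow> RM TB G (q + r) u"
        by (rule RMm) (use TT q r in \<open>auto simp: sle_def\<close>)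
      show "bidok TB G q n l r"
        using H[OF r'] A B TT unfolding bidok_def by auto
    qed
  next
    case TF
    show ?thesis
    proof (rule winL_bidI[of l])
      show "l \<le> q" using l TF by simp
      fix r assume r: "r \<le> TB - q"
      then have r': "r \<le> TB - p" using TF by simp
      consider "r < l" | "r = l" | "l < r" by linarith
      then show "bidok TB G q n l r"
      proof cases
        case 1
        have A: "\<And>u. LM TB G (p - l) u \<Longrightarrow> LM TB G (q - l) False"
          by (rule LMm) (use TF q l in \<open>auto simp: sle_def\<close>)
        show ?thesis using H[OF r'] 1 A TF by (simp add: bidok_T bidok_F) blast
      next
        case 2
        have r2: "l + 1 \<le> TB - p" using r 2 TF q by linarith
        have B: "RM TB G (p + (l + 1)) True \<Longrightarrow> RM TB G (q + l) True"
          by (rule RMm) (use TF q r 2 in \<open>auto simp: sle_def\<close>)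
        show ?thesis using H[OF r2] 2 B TF by (simp add: bidok_T bidok_F)
      next
        case 3
        have B: "\<And>u. RM TB G (p + r) True \<Longrightarrow> RM TB G (q + r) u"
          by (rule RMm) (use TF q r in \<open>auto simp: sle_def\<close>)
        show ?thesis using H[OF r'] 3 B TF by (simp add: bidok_T bidok_F)
      qed
    qed
  qed
qed

lemma mon: "sle p m q n \<Longrightarrow> q \<le> TB \<Longrightarrow> winL TB G p m \<Longrightarrow> winL TB G q n"
proof (induction G arbitrary: p m q n rule: measure_induct_rule[of size])
  case (less G)
  show ?case
  proof (rule mon_step[OF _ _ less.prems])
    fix q u q' u' assume "sle q u q' u'" "q' \<le> TB" "LM TB G q u"
    then show "LM TB G q' u'" unfolding LM_def using less.IH size_lopts by blast
  next
    fix q u q' u' assume "sle q u q' u'" "q' \<le> TB" "RM TB G q u"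
    then show "RM TB G q' u'" unfolding RM_def using less.IH size_ropts by blast
  qed
qed

lemma LM_mon: "sle q u q' u' \<Longrightarrow> q' \<le> TB \<Longrightarrow> LM TB G q u \<Longrightarrow> LM TB G q' u'"
  unfolding LM_def using mon by blast
lemma RM_mon: "sle q u q' u' \<Longrightarrow> q' \<le> TB \<Longrightarrow> RM TB G q u \<Longrightarrow> RM TB G q' u'"
  unfolding RM_def using mon by blast

lemma L1: assumes p: "p \<le> TB" and h: "RM TB G p True" shows "winL TB G p False"
proof (rule winL_bidI[of 0])
  show "0 \<le> p" by simp
  fix r assume r: "r \<le> TB - p"
  show "bidok TB G p False 0 r"
  proof (cases "r = 0")
    case True then show ?thesis using h bidok_F(2)[of TB G p] by simp
  next
    case False
    have "RM TB G (p + r) False" by (rule RM_mon[OF _ _ h]) (use False p r in \<open>auto simp: sle_def\<close>)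
    moreover have "RM TB G (p + r) True" by (rule RM_mon[OF _ _ h]) (use False p r in \<open>auto simp: sle_def\<close>)
    ultimately show ?thesis using False bidok_F(3)[of 0 r TB G p] by simp
  qed
qed

lemma L1d: assumes p: "p \<le> TB" and h: "\<not> LM TB G p False" shows "\<not> winL TB G p True"
proof
  assume w: "winL TB G p True"
  obtain l where l: "l \<le> p" and H: "\<And>r. r \<le> TB - p \<Longrightarrow> bidok TB G p True l r"
    using winL_bidE[OF w] by blast
  have H0: "bidok TB G p True l 0" using H by simp
  show False
  proof (cases "l = 0")
    case True then show ?thesis using H0 h bidok_T(2)[of TB G p 0] by simp
  next
    case False
    then have "LM TB G (p - l) True \<or> LM TB G (p - l) False" using H0 bidok_T(1)[of 0 l TB G p] by simp
    moreover have "\<And>u. LM TB G (p - l) u \<Longrightarrow> LM TB G p False"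
      by (rule LM_mon) (use False l p in \<open>auto simp: sle_def\<close>)
    ultimately show False using h by blast
  qed
qed

lemma H1'abs:
  assumes GH: "G |\<in>| lopts H"
    and LT: "\<And>q u. q \<le> TB \<Longrightarrow> LM TB G q u \<Longrightarrow> LM TB H q u"
    and RT: "\<And>q u. q \<le> TB \<Longrightarrow> RM TB G q u \<Longrightarrow> RM TB H q u"
    and w: "winL TB G p False" and p: "p \<le> TB"
  shows "winL TB H p True"
proof -
  obtain l where l: "l \<le> p" and H: "\<And>r. r \<le> TB - p \<Longrightarrow> bidok TB G p False l r"
    using winL_bidE[OF w] by blast
  show ?thesis
  proof (cases "l = 0")
    case True
    show ?thesis
    proof (rule winL_bidI[of 0])
      show "0 \<le> p" by simp
      fix r assume r: "r \<le> TB - p"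
      show "bidok TB H p True 0 r"
      proof (cases "r = 0")
        case True
        have "LM TB H p False" using GH w unfolding LM_def by blast
        then show ?thesis using True bidok_T(2)[of TB H p 0] by simp
      next
        case False
        have "RM TB G (p + r) True" using H[OF r] \<open>l = 0\<close> False bidok_F(3)[of 0 r TB G p] by simp
        then have "RM TB H (p + r) True" using RT p r by simp
        then show ?thesis using False bidok_T(3)[of 0 r TB H p] by simp
      qed
    qed
  next
    case False
    have "LM TB G (p - l) False" using H[of 0] False bidok_F(1)[of 0 l TB G p] by simp
    then have LH: "LM TB H (p - l) False" using LT p by simp
    show ?thesis
    proof (rule winL_bidI[OF l])
      fix r assume r: "r \<le> TB - p"
      consider "r < l" | "r = l" | "l < r" by linarith
      then show "bidok TB H p True l r"
      proof cases
        case 1 then show ?thesis using LH bidok_T(1)[of r l TB H p] by simp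
      next
        case 2 then show ?thesis using LH bidok_T(2)[of TB H p l] by simp
      next
        case 3
        have "RM TB G (p + r) True" using H[OF r] 3 bidok_F(3)[of l r TB G p] by simp
        then have "RM TB H (p + r) True" using RT p r by simp
        then show ?thesis using 3 bidok_T(3)[of l r TB H p] by simp
      qed
    qed
  qed
qed

lemma H1abs:
  assumes GH: "G |\<in>| ropts H"
    and LT: "\<And>q u. q \<le> TB \<Longrightarrow> LM TB H q u \<Longrightarrow> LM TB G q u"
    and RT: "\<And>q u. q \<le> TB \<Longrightarrow> RM TB H q u \<Longrightarrow> RM TB G q u"
    and w: "winL TB H p False" and p: "p \<le> TB"
  shows "winL TB G p True"
proof -
  obtain l where l: "l \<le> p" and H: "\<And>r. r \<le> TB - p \<Longrightarrow> bidok TB H p False l r"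
    using winL_bidE[OF w] by blast
  show ?thesis
  proof (cases "l = 0")
    case True
    have "RM TB H p True" using H[of 0] True bidok_F(2)[of TB H p 0] by simp
    then show ?thesis using GH unfolding RM_def by blast
  next
    case False
    have "LM TB H (p - l) False" using H[of 0] False bidok_F(1)[of 0 l TB H p] by simp
    then have LG: "LM TB G (p - l) False" using LT p by simp
    show ?thesis
    proof (rule winL_bidI[OF l])
      fix r assume r: "r \<le> TB - p"
      consider "r < l" | "r = l" | "l < r" by linarith
      then show "bidok TB G p True l r"
      proof cases
        case 1 then show ?thesis using LG bidok_T(1)[of r l TB G p] by simp
      next
        case 2 then show ?thesis using LG bidok_T(2)[of TB G p l] by simp
      next
        case 3
        have "RM TB H (p + r) True" using H[OF r] 3 bidok_F(3)[of l r TB H p] by simp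
        then have "RM TB G (p + r) True" using RT p r by simp
        then show ?thesis using 3 bidok_T(3)[of l r TB G p] by simp
      qed
    qed
  qed
qed

lemma P'abs:
  assumes GH: "G |\<in>| lopts H"
    and RT: "\<And>q u. q \<le> TB \<Longrightarrow> RM TB G q u \<Longrightarrow> RM TB H q u"
    and RT2: "\<And>q. q \<le> TB \<Longrightarrow> RM TB G q False \<Longrightarrow> RM TB H q True"
    and h: "RM TB G p m" and p: "p \<le> TB"
  shows "winL TB H p m"
proof (rule winL_bidI[of 0])
  show "0 \<le> p" by simp
  fix r assume r: "r \<le> TB - p"
  have mono: "RM TB G (p + r) False" if "RM TB G p False"
    by (rule RM_mon[OF _ _ that]) (use p r in \<open>auto simp: sle_def\<close>)
  show "bidok TB H p m 0 r"
  proof (cases m)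
    case True
    show ?thesis
    proof (cases "r = 0")
      case r0: True
      have "winL TB G p False" using L1[OF p] h True by simp
      then have "LM TB H p False" using GH unfolding LM_def by blast
      then show ?thesis using True r0 bidok_T(2)[of TB H p 0] by simp
    next
      case False
      have "RM TB G (p + r) True" by (rule RM_mon[OF _ _ h]) (use True p r in \<open>auto simp: sle_def\<close>)
      then have "RM TB H (p + r) True" using RT p r by simp
      then show ?thesis using True False bidok_T(3)[of 0 r TB H p] by simp
    qed
  next
    case False
    show ?thesis
    proof (cases "r = 0")
      case r0: True
      have "RM TB H p True" using RT2 p h False by simp
      then show ?thesis using False r0 bidok_F(2)[of TB H p 0] by simp
    next
      case r1: False
      have "RM TB G (p + r) False" using mono h False by simp
      then have "RM TB H (p + r) False" "RM TB H (p + r) True" using RT RT2 p r by simp_all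
      then show ?thesis using False r1 bidok_F(3)[of 0 r TB H p] by simp
    qed
  qed
qed

lemma Pabs:
  assumes GH: "G |\<in>| ropts H"
    and LT: "\<And>q u. q \<le> TB \<Longrightarrow> LM TB H q u \<Longrightarrow> LM TB G q u"
    and LT2: "\<And>q. q \<le> TB \<Longrightarrow> LM TB H q False \<Longrightarrow> LM TB G q True"
    and h: "\<not> LM TB G p m" and p: "p \<le> TB"
  shows "\<not> winL TB H p m"
proof
  assume w: "winL TB H p m"
  obtain l where l: "l \<le> p" and H: "\<And>r. r \<le> TB - p \<Longrightarrow> bidok TB H p m l r"
    using winL_bidE[OF w] by blast
  have H0: "bidok TB H p m l 0" using H by simp
  have mono: "\<And>u. LM TB G (p - l) u \<Longrightarrow> LM TB G p u"
    by (rule LM_mon) (use p in \<open>auto simp: sle_def\<close>)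
  show False
  proof (cases m)
    case True
    show False
    proof (cases "l = 0")
      case True
      then have "LM TB H p False" using H0 \<open>m\<close> bidok_T(2)[of TB H p 0] by simp
      then show False using LT2 p h \<open>m\<close> by simp
    next
      case False
      then have "LM TB H (p - l) True \<or> LM TB H (p - l) False" using H0 \<open>m\<close> bidok_T(1)[of 0 l TB H p] by simp
      then have "LM TB G (p - l) True" using LT LT2 p by auto
      then show False using mono h \<open>m\<close> by simp
    qed
  next
    case False
    show False
    proof (cases "l = 0")
      case True
      then have "RM TB H p True" using H0 \<open>\<not>m\<close> bidok_F(2)[of TB H p 0] by simp
      then have "winL TB G p True" using GH unfolding RM_def by blast
      then show False using L1d[OF p] h \<open>\<not>m\<close> by simp
    next
      case l1: False
      then have "LM TB H (p - l) False" using H0 \<open>\<not>m\<close> bidok_F(1)[of 0 l TB H p] by simp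
      then have "LM TB G (p - l) False" using LT p by auto
      then show False using mono h \<open>\<not>m\<close> by simp
    qed
  qed
qed

lemma LM_T_transfer:
  assumes "0 < a \<Longrightarrow> 0 < a'"
    and "0 < a \<Longrightarrow> winL TB (T (a - 1) b X) q u \<Longrightarrow> winL TB (T (a' - 1) b' X) q' u'"
    and "\<And>x. x |\<in>| lopts X \<Longrightarrow> winL TB (T a b x) q u \<Longrightarrow> winL TB (T a' b' x) q' u'"
    and "LM TB (T a b X) q u"
  shows "LM TB (T a' b' X) q' u'"
  using assms unfolding LM_def lopts_T by (auto split: if_splits)

lemma RM_T_transfer:
  assumes "0 < b' \<Longrightarrow> 0 < b"
    and "0 < b' \<Longrightarrow> winL TB (T a (b - 1) X) q u \<Longrightarrow> winL TB (T a' (b' - 1) X) q' u'"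
    and "\<And>x. x |\<in>| ropts X \<Longrightarrow> winL TB (T a b x) q u \<Longrightarrow> winL TB (T a' b' x) q' u'"
    and "RM TB (T a b X) q u"
  shows "RM TB (T a' b' X) q' u'"
  using assms unfolding RM_def ropts_T by (auto split: if_splits)

lemma PMa: "p \<le> TB \<Longrightarrow> winL TB (T a b X) p m \<Longrightarrow> winL TB (T (Suc a) b X) p m"
proof (induction "a + b + size X" arbitrary: a b X p m rule: less_induct)
  case less
  note IH = less.hyps
  show ?case
  proof (rule dom2[OF _ _ less.prems])
    fix q u assume q: "q \<le> TB" "LM TB (T a b X) q u"
    show "LM TB (T (Suc a) b X) q u"
    proof (rule LM_T_transfer[OF _ _ _ q(2)])
      show "0 < a \<Longrightarrow> 0 < Suc a" by simp
      show "winL TB (T (Suc a - 1) b X) q u" if "0 < a" "winL TB (T (a - 1) b X) q u"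
        using IH[of "a - 1" b X q u] that q(1) by simp
      show "winL TB (T (Suc a) b x) q u" if "x |\<in>| lopts X" "winL TB (T a b x) q u" for x
        using IH[of a b x q u] that q(1) size_lopts[OF that(1)] by simp
    qed
  next
    fix q u assume q: "q \<le> TB" "RM TB (T a b X) q u"
    show "RM TB (T (Suc a) b X) q u"
    proof (rule RM_T_transfer[OF _ _ _ q(2)])
      show "0 < b \<Longrightarrow> 0 < b" by simp
      show "winL TB (T (Suc a) (b - 1) X) q u" if "0 < b" "winL TB (T a (b - 1) X) q u"
        using IH[of a "b - 1" X q u] that q(1) by simp
      show "winL TB (T (Suc a) b x) q u" if "x |\<in>| ropts X" "winL TB (T a b x) q u" for x
        using IH[of a b x q u] that q(1) size_ropts[OF that(1)] by simp
    qed
  qed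
qed

lemma PMb: "p \<le> TB \<Longrightarrow> winL TB (T a (Suc b) X) p m \<Longrightarrow> winL TB (T a b X) p m"
proof (induction "a + b + size X" arbitrary: a b X p m rule: less_induct)
  case less
  note IH = less.hyps
  show ?case
  proof (rule dom2[OF _ _ less.prems])
    fix q u assume q: "q \<le> TB" "LM TB (T a (Suc b) X) q u"
    show "LM TB (T a b X) q u"
    proof (rule LM_T_transfer[OF _ _ _ q(2)])
      show "0 < a \<Longrightarrow> 0 < a" by simp
      show "winL TB (T (a - 1) b X) q u" if "0 < a" "winL TB (T (a - 1) (Suc b) X) q u"
        using IH[of "a - 1" b X q u] that q(1) by simp
      show "winL TB (T a b x) q u" if "x |\<in>| lopts X" "winL TB (T a (Suc b) x) q u" for x
        using IH[of a b x q u] that q(1) size_lopts[OF that(1)] by simp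
    qed
  next
    fix q u assume q: "q \<le> TB" "RM TB (T a (Suc b) X) q u"
    show "RM TB (T a b X) q u"
    proof (rule RM_T_transfer[OF _ _ _ q(2)])
      show "0 < b \<Longrightarrow> 0 < Suc b" by simp
      show "winL TB (T a (b - 1) X) q u" if "0 < b" "winL TB (T a (Suc b - 1) X) q u"
        using IH[of a "b - 1" X q u] that q(1) by simp
      show "winL TB (T a b x) q u" if "x |\<in>| ropts X" "winL TB (T a (Suc b) x) q u" for x
        using IH[of a b x q u] that q(1) size_ropts[OF that(1)] by simp
    qed
  qed
qed

lemma PMa': "0 < a \<Longrightarrow> p \<le> TB \<Longrightarrow> winL TB (T (a - 1) b X) p m \<Longrightarrow> winL TB (T a b X) p m"
  using PMa[of p TB "a - 1" b X m] by simp

lemma LM_PMa: "q \<le> TB \<Longrightarrow> LM TB (T a b X) q u \<Longrightarrow> LM TB (T (Suc a) b X) q u"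
  by (rule LM_T_transfer) (auto intro: PMa PMa')
lemma RM_PMa: "q \<le> TB \<Longrightarrow> RM TB (T a b X) q u \<Longrightarrow> RM TB (T (Suc a) b X) q u"
  by (rule RM_T_transfer) (auto intro: PMa)
lemma LM_PMb: "q \<le> TB \<Longrightarrow> LM TB (T a (Suc b) X) q u \<Longrightarrow> LM TB (T a b X) q u"
  by (rule LM_T_transfer) (auto intro: PMb)
lemma RM_PMb: "q \<le> TB \<Longrightarrow> RM TB (T a (Suc b) X) q u \<Longrightarrow> RM TB (T a b X) q u"
  by (rule RM_T_transfer) (auto intro: PMb)

lemma H1'fam: "p \<le> TB \<Longrightarrow> winL TB (T a b x) p False \<Longrightarrow> winL TB (T (Suc a) b x) p True"
  by (rule H1'abs[where G = "T a b x"]) (auto simp: lopts_T intro: LM_PMa RM_PMa)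

lemma H1fam: "p \<le> TB \<Longrightarrow> winL TB (T a (Suc b) x) p False \<Longrightarrow> winL TB (T a b x) p True"
  by (rule H1abs[where H = "T a (Suc b) x"]) (auto simp: ropts_T intro: LM_PMb RM_PMb)

lemma P'fam: "p \<le> TB \<Longrightarrow> RM TB (T a b X) p m \<Longrightarrow> winL TB (T (Suc a) b X) p m"
proof (rule P'abs[where G = "T a b X"])
  show "T a b X |\<in>| lopts (T (Suc a) b X)" by (simp add: lopts_T)
  show "RM TB (T (Suc a) b X) q u" if "q \<le> TB" "RM TB (T a b X) q u" for q u
    using RM_PMa that by blast
  show "RM TB (T (Suc a) b X) q True" if "q \<le> TB" "RM TB (T a b X) q False" for q
    by (rule RM_T_transfer[OF _ _ _ that(2)]) (use that(1) H1'fam in auto)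
qed

lemma Pfam: "p \<le> TB \<Longrightarrow> \<not> LM TB (T a b X) p m \<Longrightarrow> \<not> winL TB (T a (Suc b) X) p m"
proof (rule Pabs[where G = "T a b X"])
  show "T a b X |\<in>| ropts (T a (Suc b) X)" by (simp add: ropts_T)
  show "LM TB (T a b X) q u" if "q \<le> TB" "LM TB (T a (Suc b) X) q u" for q u
    using LM_PMb that by blast
  show "LM TB (T a b X) q True" if "q \<le> TB" "LM TB (T a (Suc b) X) q False" for q
    by (rule LM_T_transfer[OF _ _ _ that(2)]) (use that(1) H1fam in auto)
qed

lemma E: "p \<le> TB \<Longrightarrow> winL TB (T (Suc a) (Suc b) X) p m = winL TB (T a b X) p m"
proof (induction "a + b + size X" arbitrary: a b X p m rule: less_induct)
  case less
  note IH = less.hyps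
  show ?case
  proof
    assume w: "winL TB (T (Suc a) (Suc b) X) p m"
    show "winL TB (T a b X) p m"
    proof (rule dom2[OF _ _ less.prems w])
      fix q u assume q: "q \<le> TB" "LM TB (T (Suc a) (Suc b) X) q u"
      then obtain g where g: "g |\<in>| lopts (T (Suc a) (Suc b) X)" "winL TB g q u"
        unfolding LM_def by blast
      from g(1) consider "g = T a (Suc b) X" | x where "x |\<in>| lopts X" "g = T (Suc a) (Suc b) x"
        unfolding lopts_T by auto
      then show "LM TB (T a b X) q u"
      proof cases
        case 1
        show ?thesis
        proof (cases a)
          case 0
          then show ?thesis using Pfam[OF q(1), of 0 b X u] g(2) 1 by blast
        next
          case (Suc a')
          have "winL TB (T a' b X) q u" using IH[of a' b X q u] q(1) g(2) 1 Suc by simp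
          moreover have "T a' b X |\<in>| lopts (T a b X)" using Suc by (simp add: lopts_T)
          ultimately show ?thesis unfolding LM_def by blast
        qed
      next
        case (2 x)
        have "winL TB (T a b x) q u" using IH[of a b x q u] q(1) g(2) 2 size_lopts[OF 2(1)] by simp
        moreover have "T a b x |\<in>| lopts (T a b X)" using 2 by (simp add: lopts_T)
        ultimately show ?thesis unfolding LM_def by blast
      qed
    next
      fix q u assume q: "q \<le> TB" "RM TB (T (Suc a) (Suc b) X) q u"
      show "RM TB (T a b X) q u"
      proof (rule RM_T_transfer[OF _ _ _ q(2)])
        show "0 < b \<Longrightarrow> 0 < Suc b" by simp
        show "winL TB (T a (b - 1) X) q u" if "0 < b" "winL TB (T (Suc a) (Suc b - 1) X) q u"
          using IH[of a "b - 1" X q u] that q(1) by simp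
        show "winL TB (T a b x) q u" if "x |\<in>| ropts X" "winL TB (T (Suc a) (Suc b) x) q u" for x
          using IH[of a b x q u] that q(1) size_ropts[OF that(1)] by simp
      qed
    qed
  next
    assume w: "winL TB (T a b X) p m"
    show "winL TB (T (Suc a) (Suc b) X) p m"
    proof (rule dom2[OF _ _ less.prems w])
      fix q u assume q: "q \<le> TB" "LM TB (T a b X) q u"
      show "LM TB (T (Suc a) (Suc b) X) q u"
      proof (rule LM_T_transfer[OF _ _ _ q(2)])
        show "0 < a \<Longrightarrow> 0 < Suc a" by simp
        show "winL TB (T (Suc a - 1) (Suc b) X) q u" if "0 < a" "winL TB (T (a - 1) b X) q u"
          using IH[of "a - 1" b X q u] that q(1) by simp
        show "winL TB (T (Suc a) (Suc b) x) q u" if "x |\<in>| lopts X" "winL TB (T a b x) q u" for x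
          using IH[of a b x q u] that q(1) size_lopts[OF that(1)] by simp
      qed
    next
      fix q u assume q: "q \<le> TB" "RM TB (T a b X) q u"
      show "RM TB (T (Suc a) (Suc b) X) q u"
        unfolding RM_def
      proof
        fix h assume h: "h |\<in>| ropts (T (Suc a) (Suc b) X)"
        then consider "h = T (Suc a) b X" | x where "x |\<in>| ropts X" "h = T (Suc a) (Suc b) x"
          unfolding ropts_T by auto
        then show "winL TB h q u"
        proof cases
          case 1
          show ?thesis
          proof (cases b)
            case 0
            then show ?thesis using P'fam[OF q(1) q(2)] 1 by simp
          next
            case (Suc b')
            have "T a b' X |\<in>| ropts (T a b X)" using Suc by (simp add: ropts_T)
            then have "winL TB (T a b' X) q u" using q(2) unfolding RM_def by blast
            then show ?thesis using IH[of a b' X q u] q(1) 1 Suc by simp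
          qed
        next
          case (2 x)
          have "T a b x |\<in>| ropts (T a b X)" using 2 by (simp add: ropts_T)
          then have "winL TB (T a b x) q u" using q(2) unfolding RM_def by blast
          then show ?thesis using IH[of a b x q u] q(1) 2 size_ropts[OF 2(1)] by simp
        qed
      qed
    qed
  qed
qed

lemma Tnn: "p \<le> TB \<Longrightarrow> winL TB (T n n X) p m = winL TB (T 0 0 X) p m"
  by (induction n) (simp_all add: E)

theorem mainTheorem13:
  fixes TB n :: nat
  assumes "n \<ge> 1"
  shows "game_eq TB (gsum (int_game n) (gconj (int_game n))) (int_game 0)"
proof -
  have z: "gsum (int_game 0) (gconj (int_game 0)) = int_game 0" by simp
  have key: "winL TB (gsum (gsum (int_game n) (gconj (int_game n))) X) p m
      = winL TB (gsum (int_game 0) X) p m" if "p \<le> TB" for X p m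
    using Tnn[OF that, of n X m] unfolding T_def z .
  show ?thesis
    unfolding game_eq_def game_ge_def outcome_le_def outcome_def
    using key by auto
qed

end
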